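(* Let $m\ge1$, $n\ge1$, fix $t_0\in\mathbb{Z}^m$ and let $\mathcal{Z}=\{t\in\mathbb{Z}^m\mid t\ge t_0\}$. Let $T=(T^1,\dots,T^m)\in\mathbb{N}^m$, $T\ne0$. Let $A_\alpha\colon\mathcal{Z}\to\mathcal{M}_n(\mathbb{C})$, $\alpha\in\{1,\dots,m\}$, satisfy $$A_\alpha(t+1_\beta)A_\beta(t)=A_\beta(t+1_\alpha)A_\alpha(t),\quad \forall t\in\mathcal{Z},\ \forall\alpha,\beta,$$ and suppose that each $A_\alpha$ is periodic of period $T$ (i.e. $A_\alpha(t+T)=A_\alpha(t)$ for all $t\in\mathcal{Z}$) and $A_\alpha(t)$ is invertible for all $t\in\mathcal{Z}$. Let $\Phi(t)=\chi(t,t_0)$, $t\in\mathcal{Z}$. Then there exist a function $P\colon\mathcal{Z}\to\mathcal{M}_n(\mathbb{C})$, periodic of period $T$, and a constant invertible matrix $B\in\mathcal{M}_n(\mathbb{C})$ such that $\Phi(t)=P(t)B^{|t|}$ for all $t\ge t_0$, where $|t|=t^1+\dots+t^m$.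
   Context: $\mathbb{N}=\{0,1,2,\dots\}$; $1_\alpha\in\mathbb{Z}^m$ has $1$ in position $\alpha$ and $0$ elsewhere; $s\le t$ in $\mathbb{Z}^m$ means $s^\alpha\le t^\alpha$ for all $\alpha$. Under the compatibility relations, for each $s\in\mathcal{Z}$ there is a unique $\chi(\cdot,s)\colon\{t\in\mathcal{Z}\mid t\ge s\}\to\mathcal{M}_n(\mathbb{C})$ with $\chi(s,s)=I_n$ and $\chi(t+1_\alpha,s)=A_\alpha(t)\chi(t,s)$ for all $t\ge s$ and all $\alpha$ (the transition matrix). Negative integer powers of $B$ are powers of $B^{-1}$. *)

theory Defs
  imports "HOL-Analysis.Analysis" "HOL-Library.Function_Algebras"
begin

primrec mat_pow :: "'a::comm_ring_1 ^'n^'n \<Rightarrow> nat \<Rightarrow> 'a ^'n^'n" where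
  "mat_pow B 0 = mat 1"
| "mat_pow B (Suc k) = B ** mat_pow B k"

definition mat_ipow :: "'a::field ^'n^'n \<Rightarrow> int \<Rightarrow> 'a ^'n^'n" where
  "mat_ipow B k = (if 0 \<le> k then mat_pow B (nat k) else mat_pow (matrix_inv B) (nat (- k)))"

definition unit_pt :: "'m \<Rightarrow> ('m \<Rightarrow> int)" where
  "unit_pt \<alpha> = (\<lambda>\<beta>. if \<beta> = \<alpha> then 1 else 0)"

definition abs_pt :: "('m::finite \<Rightarrow> int) \<Rightarrow> int" where
  "abs_pt t = (\<Sum>\<beta>\<in>UNIV. t \<beta>)"

(* Phi is the transition matrix chi(., s) from s: Phi s = I and Phi(t+1_alpha) = A_alpha(t) Phi(t) *)
definition is_transition_from ::
  "('m \<Rightarrow> ('m \<Rightarrow> int) \<Rightarrow> 'a::comm_ring_1^'n^'n) \<Rightarrow> ('m \<Rightarrow> int) \<Rightarrow> (('m \<Rightarrow> int) \<Rightarrow> 'a^'n^'n) \<Rightarrow> bool" where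
  "is_transition_from A s Phi \<longleftrightarrow> Phi s = mat 1 \<and>
     (\<forall>t \<ge> s. \<forall>\<alpha>. Phi (t + unit_pt \<alpha>) = A \<alpha> t ** Phi t)"

end

theory Submission
  imports Defs "HOL-Computational_Algebra.Computational_Algebra" "HOL-Computational_Algebra.Field_as_Ring"
begin


lemma diff_dvd_pow_diff: "(x - y :: 'a::comm_ring_1) dvd x ^ n - y ^ n"
proof (induction n)
  case 0 then show ?case by simp
next
  case (Suc n)
  have "x ^ Suc n - y ^ Suc n = x * (x ^ n - y ^ n) + (x - y) * y ^ n"
    by (simp add: algebra_simps)
  then show ?case using Suc by (simp add: dvd_add)
qed

lemma binom_sq_dvd:
  fixes q y :: "'a::comm_ring_1"
  shows "y^2 dvd (q + y) ^ Suc j - q ^ Suc j - of_nat (Suc j) * q ^ j * y"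
proof (induction j)
  case 0 then show ?case by simp
next
  case (Suc j)
  then obtain m where m: "(q + y) ^ Suc j - q ^ Suc j - of_nat (Suc j) * q ^ j * y = y^2 * m"
    by (auto elim: dvdE)
  have e: "(q + y) ^ Suc j = q ^ Suc j + of_nat (Suc j) * q ^ j * y + y^2 * m"
    using m by (simp add: algebra_simps)
  have "(q + y) ^ Suc (Suc j) - q ^ Suc (Suc j) - of_nat (Suc (Suc j)) * q ^ Suc j * y
     = y^2 * (q * m + of_nat (Suc j) * q ^ j + y * m)"
    by (simp only: power_Suc[of "q+y" "Suc j"] e) (simp add: algebra_simps power2_eq_square)
  then show ?case by simp
qed

lemma complex_root_exists: "k > 0 \<Longrightarrow> (c::complex) \<noteq> 0 \<Longrightarrow> \<exists>mu. mu ^ k = c"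
proof -
  assume k: "k > 0" and l: "c \<noteq> 0"
  have "exp (Ln c / of_nat k :: complex) ^ k = exp (of_nat k * (Ln c / of_nat k))"
    using exp_of_nat_mult[of k "Ln c / of_nat k"] by simp
  also have "\<dots> = c" using k l by (simp add: exp_Ln)
  finally show ?thesis by blast
qed

lemma hensel_step:
  fixes X q g y m g2 :: "'a::comm_ring_1"
  assumes g: "q ^ k - Y = X^e * g" and y: "y = hh * X^e" and e: "e \<noteq> 0"
    and m: "(q + y) ^ k - q ^ k - kk * q ^ j * y = y^2 * m"
    and g2: "g + kk * q ^ j * hh = X * g2"
  shows "(q + y) ^ k - Y = X^Suc e * (g2 + X^(e - 1) * hh^2 * m)"
proof -
  have y2: "y^2 = hh^2 * X^(2*e)"
    unfolding y by (simp add: power_mult_distrib power_mult mult.commute)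
  have "2*e = Suc e + (e - 1)" using e by simp
  then have y2': "y^2 = X^Suc e * (X^(e - 1) * hh^2)"
    unfolding y2 by (simp only: power_add) (simp add: algebra_simps)
  have "(q + y) ^ k - Y = (q ^ k - Y) + kk * q ^ j * y + y^2 * m"
    using m by (simp add: algebra_simps)
  also have "\<dots> = X^e * (g + kk * q ^ j * hh) + y^2 * m"
    by (simp add: g y algebra_simps)
  also have "\<dots> = X^e * (X * g2) + X^Suc e * (X^(e - 1) * hh^2) * m"
    by (simp only: g2 y2')
  also have "\<dots> = X^Suc e * (g2 + X^(e - 1) * hh^2 * m)"
    by (simp add: algebra_simps)
  finally show ?thesis .
qed

lemma hensel_root:
  fixes c :: complex
  assumes k: "k > 0" and l: "c \<noteq> 0"
  shows "\<exists>q. [:-c,1:]^e dvd q ^ k - [:0,1:] \<and> poly q c \<noteq> 0"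
proof (induction e)
  case 0 then show ?case by (intro exI[of _ 1]) simp
next
  case (Suc e)
  show ?case
  proof (cases "e = 0")
    case True
    obtain mu where mu: "mu ^ k = c" using complex_root_exists k l by blast
    have "[:-c,1:] dvd [:mu:] ^ k - [:0,1:]"
      using mu by (simp add: poly_eq_0_iff_dvd[symmetric])
    then have "[:-c,1:]^Suc e dvd [:mu:] ^ k - [:0,1:]" using True by simp
    moreover have "poly [:mu:] c \<noteq> 0" using mu l k by auto
    ultimately show ?thesis by blast
  next
    case False
    define X where "X = [:-c,1:]"
    from Suc obtain q where q: "X^e dvd q ^ k - [:0,1:]" and q0: "poly q c \<noteq> 0"
      unfolding X_def by blast
    from q obtain g where g: "q ^ k - [:0,1:] = X^e * g" by (auto elim: dvdE)
    define h where "h = - poly g c / (of_nat k * poly q c ^ (k - 1))"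
    define y where "y = [:h:] * X^e"
    obtain j where kj: "k = Suc j" using k by (cases k) auto
    obtain m where m: "(q + y) ^ k - q ^ k - of_nat k * q ^ j * y = y^2 * m"
      using binom_sq_dvd[of y q j] kj by (auto elim: dvdE)
    have nz: "of_nat k * poly q c ^ (k - 1) \<noteq> 0" using k q0 by simp
    have "poly (g + of_nat k * q ^ j * [:h:]) c = 0"
      using nz unfolding h_def kj by (simp add: field_simps)
    then have "[:-c,1:] dvd g + of_nat k * q ^ j * [:h:]" by (simp only: poly_eq_0_iff_dvd)
    then obtain g2 where g2: "g + of_nat k * q ^ j * [:h:] = X * g2"
      unfolding X_def by (rule dvdE)
    have "(q + y) ^ k - [:0,1:] = X^Suc e * (g2 + X^(e - 1) * [:h:]^2 * m)"
      by (rule hensel_step[OF g y_def False m g2])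
    then have d: "[:-c,1:]^Suc e dvd (q + y) ^ k - [:0,1:]" unfolding X_def by simp
    have "poly (q + y) c = poly q c" using False by (simp add: y_def X_def)
    with d q0 show ?thesis by (intro exI[of _ "q + y"]) simp
  qed
qed

lemma crt_root:
  fixes a b :: "complex poly"
  assumes "coprime a b" "a dvd q1 ^ k - x" "b dvd q2 ^ k - x"
  shows "\<exists>q. a * b dvd q ^ k - x"
proof -
  define u where "u = fst (bezout_coefficients a b)"
  define v where "v = snd (bezout_coefficients a b)"
  have uv: "u * a + v * b = 1"
    using bezout_coefficients_fst_snd[of a b] assms(1) unfolding u_def v_def
    by (simp add: coprime_imp_gcd_eq_1)
  define q where "q = q1 * v * b + q2 * u * a"
  have vb: "v * b = 1 - u * a" using uv by (simp add: algebra_simps)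
  have ua: "u * a = 1 - v * b" using uv by (simp add: algebra_simps)
  have "q - q1 = a * (q2 * u - q1 * u)"
    unfolding q_def mult.assoc vb by (simp add: algebra_simps)
  then have "a dvd q - q1" by simp
  then have "a dvd q ^ k - q1 ^ k" using diff_dvd_pow_diff dvd_trans by blast
  moreover have "q ^ k - x = (q ^ k - q1 ^ k) + (q1 ^ k - x)" by simp
  ultimately have A: "a dvd q ^ k - x" using assms(2) by (metis dvd_add)
  have "q - q2 = b * (q1 * v - q2 * v)"
    unfolding q_def mult.assoc ua by (simp add: algebra_simps)
  then have "b dvd q - q2" by simp
  then have "b dvd q ^ k - q2 ^ k" using diff_dvd_pow_diff dvd_trans by blast
  moreover have "q ^ k - x = (q ^ k - q2 ^ k) + (q2 ^ k - x)" by simp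
  ultimately have B: "b dvd q ^ k - x" using assms(3) by (metis dvd_add)
  show ?thesis using divides_mult[OF A B assms(1)] by blast
qed

lemma poly_root_mod:
  fixes r :: "complex poly"
  assumes "r \<noteq> 0" "poly r 0 \<noteq> 0" "k > 0"
  shows "\<exists>q. r dvd q ^ k - [:0,1:]"
  using assms(1,2)
proof (induction "degree r" arbitrary: r rule: less_induct)
  case less
  show ?case
  proof (cases "degree r = 0")
    case True
    then have "is_unit r" using less.prems is_unit_iff_degree by blast
    then show ?thesis by blast
  next
    case False
    then have "\<not> constant (poly r)" by (simp add: constant_degree)
    then obtain c where l: "poly r c = 0" using fundamental_theorem_of_algebra by blast
    have l0: "c \<noteq> 0" using l less.prems by auto
    obtain s where s: "r = [:-c,1:] ^ order c r * s" and ns: "\<not> [:-c,1:] dvd s"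
      using order_decomp[OF less.prems(1)] by blast
    have o: "order c r \<noteq> 0" using l less.prems order_root by blast
    have s0: "s \<noteq> 0" using s less.prems by auto
    have "degree ([:-c,1:]^order c r * s) = degree ([:-c,1:]^order c r) + degree s"
      by (rule degree_mult_eq) (simp_all add: s0)
    then have "degree r = order c r + degree s"
      using s by (simp add: degree_linear_power)
    then have ds: "degree s < degree r" using o by simp
    have ps: "poly s 0 \<noteq> 0"
    proof
      assume "poly s 0 = 0"
      then have "poly r 0 = 0" by (subst s) simp
      then show False using less.prems(2) by simp
    qed
    obtain q2 where q2: "s dvd q2 ^ k - [:0,1:]" using less.hyps[OF ds s0 ps] by blast
    obtain q1 where q1: "[:-c,1:] ^ order c r dvd q1 ^ k - [:0,1:]"
      using hensel_root[OF assms(3) l0] by blast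
    have "prime_elem [:-c,1:]" by (rule prime_elem_linear_field_poly) simp
    then have "coprime [:-c,1:] s" using ns prime_elem_imp_coprime by blast
    then have "coprime ([:-c,1:] ^ order c r) s" by simp
    then obtain q where "[:-c,1:] ^ order c r * s dvd q ^ k - [:0,1:]"
      using crt_root[OF _ q1 q2] by blast
    then have "r dvd q ^ k - [:0,1:]" using s by simp
    then show ?thesis by blast
  qed
qed


lemma matrix_add_rdistrib: "((A + B) ** C) = (A ** C) + (B ** C)"
  by (vector matrix_matrix_mult_def sum.distrib[symmetric] field_simps)

lemma mat_mul_left: "mat a ** (A::'a::comm_semiring_1^'n^'m) = (\<chi> i j. a * A$i$j)"
  unfolding matrix_matrix_mult_def mat_def
  by (auto simp: vec_eq_iff if_distrib if_distribR sum.delta'[OF finite] cong: if_cong)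

lemma mat_mul_right: "(A::'a::comm_semiring_1^'n^'m) ** mat a = (\<chi> i j. a * A$i$j)"
  unfolding matrix_matrix_mult_def mat_def
  by (auto simp: vec_eq_iff if_distrib if_distribR sum.delta'[OF finite] mult.commute cong: if_cong)

lemma mat_comm: "mat a ** (A::'a::comm_semiring_1^'n^'n) = A ** mat a"
  by (simp add: mat_mul_left mat_mul_right)

lemma mat_add: "mat a + mat b = (mat (a + b) :: 'a::semiring_1^'n^'n)"
  by (simp add: vec_eq_iff mat_def)

lemma mat_mult_mat: "mat a ** mat b = (mat (a * b) :: 'a::comm_semiring_1^'n^'n)"
  unfolding mat_mul_left by (simp add: vec_eq_iff mat_def)

lemma mat_of_real: "mat (complex_of_real r) ** (M::complex^'n^'m) = r *\<^sub>R M"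
  unfolding mat_mul_left by (simp add: vec_eq_iff) (simp add: scaleR_conv_of_real)

definition peval :: "complex poly \<Rightarrow> complex^'n^'n \<Rightarrow> complex^'n^'n" where
  "peval p C = fold_coeffs (\<lambda>a M. mat a + C ** M) p 0"

lemma peval_0 [simp]: "peval 0 C = 0"
  by (simp add: peval_def)

lemma peval_pCons [simp]: "peval (pCons a p) C = mat a + C ** peval p C"
  by (cases "p = 0 \<and> a = 0") (auto simp add: peval_def)

lemma peval_add: "peval (p + q) C = peval p C + peval q C"
proof (induction p arbitrary: q rule: pCons_induct)
  case 0 then show ?case by simp
next
  case (pCons a p)
  note IH = pCons.IH
  obtain b q' where qq: "q = pCons b q'" by (cases q rule: pCons_cases) auto
  have "peval (pCons a p + q) C = mat (a + b) + C ** peval (p + q') C"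
    by (simp add: qq)
  also have "\<dots> = mat (a + b) + C ** (peval p C + peval q' C)"
    by (simp only: IH)
  also have "\<dots> = peval (pCons a p) C + peval q C"
    by (simp add: qq matrix_add_ldistrib mat_add[symmetric] add_ac)
  finally show ?case .
qed

lemma mat_comm_assoc: "mat a ** ((A::'a::comm_semiring_1^'n^'n) ** X) = A ** (mat a ** X)"
proof -
  have "mat a ** (A ** X) = (mat a ** A) ** X" by (simp add: matrix_mul_assoc)
  also have "\<dots> = (A ** mat a) ** X" by (simp only: mat_comm)
  finally show ?thesis by (simp add: matrix_mul_assoc)
qed

lemma peval_smult: "peval (smult a p) C = mat a ** peval p C"
proof (induction p rule: pCons_induct)
  case 0 then show ?case by simp
next
  case (pCons b p)
  have "peval (smult a (pCons b p)) C = mat (a * b) + C ** (mat a ** peval p C)"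
    by (simp add: pCons.IH)
  also have "\<dots> = mat a ** peval (pCons b p) C"
    by (simp only: peval_pCons matrix_add_ldistrib mat_mult_mat mat_comm_assoc)
  finally show ?case .
qed

lemma peval_mult: "peval (p * q) C = peval p C ** peval q C"
proof (induction p rule: pCons_induct)
  case 0 then show ?case by simp
next
  case (pCons a p)
  then show ?case
    by (simp add: peval_add peval_smult matrix_add_rdistrib matrix_mul_assoc)
qed

lemma peval_1 [simp]: "peval 1 C = mat 1"
  by (simp add: one_pCons)

lemma peval_const [simp]: "peval [:a:] C = mat a"
  by simp

lemma peval_X [simp]: "peval [:0,1:] C = C"
  by simp

lemma peval_power: "peval (p ^ k) C = mat_pow (peval p C) k"
  by (induction k) (simp_all add: peval_mult)

lemma peval_diff: "peval (p - q) C = peval p C - peval q C"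
proof -
  have "peval p C = peval ((p - q) + q) C" by simp
  also have "\<dots> = peval (p - q) C + peval q C" by (rule peval_add)
  finally show ?thesis by simp
qed

lemma peval_monom: "peval (monom a j) C = mat a ** mat_pow C j"
proof (induction j)
  case 0 then show ?case by (simp add: monom_0)
next
  case (Suc j)
  have "peval (monom a (Suc j)) C = C ** (mat a ** mat_pow C j)"
    by (simp add: monom_Suc Suc.IH)
  also have "\<dots> = mat a ** mat_pow C (Suc j)"
    by (simp only: mat_comm_assoc mat_pow.simps)
  finally show ?case .
qed

lemma peval_sum: "finite S \<Longrightarrow> peval (\<Sum>i\<in>S. f i) C = (\<Sum>i\<in>S. peval (f i) C)"
  by (induction S rule: finite_induct) (simp_all add: peval_add)

lemma annihilator:
  fixes C :: "complex^'n^'n"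
  shows "\<exists>p. p \<noteq> 0 \<and> peval p C = 0"
proof -
  define D where "D = DIM(complex^'n^'n)"
  define f where "f = (\<lambda>j. mat_pow C j)"
  show ?thesis
  proof (cases "inj_on f {..D}")
    case False
    then obtain i j where ij: "i \<noteq> j" "f i = f j" by (auto simp: inj_on_def)
    define p where "p = monom 1 i - monom (1::complex) j"
    have "coeff p i = 1" using ij by (simp add: p_def coeff_monom)
    then have "p \<noteq> 0" by auto
    moreover have "peval p C = 0"
      using ij by (simp add: p_def peval_diff peval_monom f_def)
    ultimately show ?thesis by blast
  next
    case True
    let ?S = "f ` {..D}"
    have "card ?S = D + 1" by (simp add: card_image True)
    then have "dependent ?S" by (intro dependent_biggerset) (simp add: D_def)
    then obtain u where u: "\<exists>v\<in>?S. u v \<noteq> 0" "(\<Sum>v\<in>?S. u v *\<^sub>R v) = 0"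
      using real_vector.dependent_finite[of ?S] by auto
    define p where "p = (\<Sum>j\<in>{..D}. monom (complex_of_real (u (f j))) j)"
    obtain j0 where j0: "j0 \<le> D" "u (f j0) \<noteq> 0" using u(1) by auto
    have "coeff p j0 = complex_of_real (u (f j0))"
      using j0 by (simp add: p_def coeff_sum coeff_monom)
    then have "p \<noteq> 0" using j0 by auto
    moreover have "peval p C = (\<Sum>j\<in>{..D}. u (f j) *\<^sub>R f j)"
      by (simp add: p_def peval_sum peval_monom mat_of_real f_def)
    moreover have "(\<Sum>j\<in>{..D}. u (f j) *\<^sub>R f j) = (\<Sum>v\<in>?S. u v *\<^sub>R v)"
      by (simp add: sum.reindex True)
    ultimately show ?thesis using u(2) by auto
  qed
qed

lemma invertible_mat1: "invertible (mat 1 :: 'a::semiring_1^'n^'n)"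
  unfolding invertible_def by (intro exI[of _ "mat 1"]) simp

lemma mat_pow_invertible: "invertible B \<Longrightarrow> invertible (mat_pow B k)"
  by (induction k) (simp_all add: invertible_mat1 invertible_mult)

lemma matrix_root:
  fixes C :: "complex^'n^'n"
  assumes C: "invertible C" and k: "k > 0"
  shows "\<exists>B. invertible B \<and> mat_pow B k = C"
proof -
  obtain p where p: "p \<noteq> 0" "peval p C = 0" using annihilator by blast
  obtain s where s: "p = [:- 0, 1:] ^ order 0 p * s" and ns: "\<not> [:- 0, 1:] dvd s"
    using order_decomp[OF p(1)] by blast
  have "peval p C = mat_pow C (order 0 p) ** peval s C"
    by (subst s) (simp add: peval_mult peval_power)
  then have e: "mat_pow C (order 0 p) ** peval s C = 0" using p by simp
  obtain M where M: "M ** mat_pow C (order 0 p) = mat 1"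
    using mat_pow_invertible[OF C] invertible_def by blast
  have ps: "peval s C = 0"
    by (metis M e matrix_mul_assoc matrix_mul_lid times0_right)
  have s0: "s \<noteq> 0" using s p by auto
  have "poly s 0 \<noteq> 0" using ns by (simp add: poly_eq_0_iff_dvd)
  then obtain q where "s dvd q ^ k - [:0,1:]" using poly_root_mod[OF s0 _ k] by blast
  then obtain w where w: "q ^ k - [:0,1:] = s * w" by (rule dvdE)
  have "peval (q ^ k - [:0,1:]) C = 0" unfolding w by (simp add: peval_mult ps)
  then have Bk: "mat_pow (peval q C) k = C" by (simp add: peval_diff peval_power)
  define B where "B = peval q C"
  obtain Ci where Ci: "C ** Ci = mat 1" using C invertible_def by blast
  obtain j where kj: "k = Suc j" using k by (cases k) auto
  have "B ** (mat_pow B j ** Ci) = mat 1"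
    using Bk Ci unfolding B_def kj by (simp add: matrix_mul_assoc)
  then have "invertible B" using invertible_right_inverse by blast
  then show ?thesis using Bk B_def by blast
qed

lemma matrix_inv_props:
  assumes "invertible (B :: 'a::semiring_1^'n^'n)"
  shows "B ** matrix_inv B = mat 1" "matrix_inv B ** B = mat 1"
proof -
  have "\<exists>B'. B ** B' = mat 1 \<and> B' ** B = mat 1" using assms invertible_def by blast
  then have "B ** matrix_inv B = mat 1 \<and> matrix_inv B ** B = mat 1"
    unfolding matrix_inv_def by (rule someI_ex)
  then show "B ** matrix_inv B = mat 1" "matrix_inv B ** B = mat 1" by auto
qed

lemma ipow_neg_nat: "mat_ipow B (- int m) = mat_pow (matrix_inv B) m"
  unfolding mat_ipow_def by (cases "m = 0") auto

lemma ipow_succ: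
  assumes B: "invertible B"
  shows "mat_ipow B (a + 1) = B ** mat_ipow B a"
proof (cases "0 \<le> a")
  case True
  then have "nat (a + 1) = Suc (nat a)" by simp
  then show ?thesis using True by (simp add: mat_ipow_def)
next
  case False
  define m where "m = nat (- a - 1)"
  have a: "a = - int (Suc m)" and a1: "a + 1 = - int m" using False by (simp_all add: m_def)
  have "B ** mat_ipow B a = B ** (matrix_inv B ** mat_pow (matrix_inv B) m)"
    unfolding a ipow_neg_nat by simp
  also have "\<dots> = mat_pow (matrix_inv B) m"
    by (simp add: matrix_mul_assoc matrix_inv_props[OF B])
  finally show ?thesis unfolding a1 ipow_neg_nat by simp
qed

lemma ipow_pred:
  assumes B: "invertible B"
  shows "mat_ipow B (a - 1) = matrix_inv B ** mat_ipow B a"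
proof -
  have "mat_ipow B a = B ** mat_ipow B (a - 1)" using ipow_succ[OF B, of "a - 1"] by simp
  then have "matrix_inv B ** mat_ipow B a = (matrix_inv B ** B) ** mat_ipow B (a - 1)"
    by (simp add: matrix_mul_assoc)
  then show ?thesis by (simp add: matrix_inv_props[OF B])
qed

lemma ipow_add:
  assumes B: "invertible B"
  shows "mat_ipow B (a + b) = mat_ipow B b ** mat_ipow B a"
proof (induction b rule: int_induct[where k = 0])
  case base then show ?case by (simp add: mat_ipow_def)
next
  case (step1 i)
  have "mat_ipow B (a + (i + 1)) = B ** mat_ipow B (a + i)"
    using ipow_succ[OF B, of "a + i"] by (simp add: add.assoc)
  then show ?case using step1 ipow_succ[OF B, of i] by (simp add: matrix_mul_assoc)
next
  case (step2 i)
  have "mat_ipow B (a + (i - 1)) = matrix_inv B ** mat_ipow B (a + i)"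
    using ipow_pred[OF B, of "a + i"] by (simp add: algebra_simps)
  then show ?case using step2 ipow_pred[OF B, of i] by (simp add: matrix_mul_assoc)
qed

lemma grid_induct_aux:
  fixes t0 :: "'m::finite \<Rightarrow> int"
  assumes base: "Q t0" and step: "\<And>t \<alpha>. t0 \<le> t \<Longrightarrow> Q t \<Longrightarrow> Q (t + unit_pt \<alpha>)"
  shows "\<forall>t. t0 \<le> t \<longrightarrow> (\<Sum>\<beta>\<in>UNIV. nat (t \<beta> - t0 \<beta>)) = n \<longrightarrow> Q t"
proof (induction n)
  case 0
  show ?case
  proof (intro allI impI)
    fix t :: "'m \<Rightarrow> int"
    assume le: "t0 \<le> t" and s: "(\<Sum>\<beta>\<in>UNIV. nat (t \<beta> - t0 \<beta>)) = 0"
    have "\<forall>\<beta>. nat (t \<beta> - t0 \<beta>) = 0" using s by simp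
    then have "t = t0" using le by (auto simp: le_fun_def fun_eq_iff intro: antisym)
    then show "Q t" using base by simp
  qed
next
  case (Suc n)
  show ?case
  proof (intro allI impI)
    fix t :: "'m \<Rightarrow> int"
    assume le: "t0 \<le> t" and s: "(\<Sum>\<beta>\<in>UNIV. nat (t \<beta> - t0 \<beta>)) = Suc n"
    obtain \<alpha> where a: "t0 \<alpha> < t \<alpha>"
    proof (rule ccontr)
      assume nt: "\<not> thesis"
      have "\<forall>\<beta>. nat (t \<beta> - t0 \<beta>) = 0"
      proof
        fix \<beta>
        have "\<not> t0 \<beta> < t \<beta>" using that nt by blast
        then show "nat (t \<beta> - t0 \<beta>) = 0" by simp
      qed
      then show False using s by simp
    qed
    define t' where "t' = t - unit_pt \<alpha>"
    have le': "t0 \<le> t'" using le a by (auto simp: le_fun_def t'_def unit_pt_def)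
    have f: "(\<lambda>\<beta>. nat (t \<beta> - t0 \<beta>)) = (\<lambda>\<beta>. nat (t' \<beta> - t0 \<beta>) + (if \<beta> = \<alpha> then 1 else 0))"
      using a le by (auto simp: fun_eq_iff t'_def unit_pt_def le_fun_def)
    have "(\<Sum>\<beta>\<in>UNIV. nat (t' \<beta> - t0 \<beta>)) = n"
      using s unfolding f by (simp add: sum.distrib)
    then have "Q t'" using Suc le' by blast
    moreover have "t = t' + unit_pt \<alpha>" by (simp add: t'_def)
    ultimately show "Q t" using step le' by metis
  qed
qed

lemma grid_induct[consumes 1, case_names base step]:
  fixes t0 :: "'m::finite \<Rightarrow> int"
  assumes "t0 \<le> t" "Q t0" "\<And>t \<alpha>. t0 \<le> t \<Longrightarrow> Q t \<Longrightarrow> Q (t + unit_pt \<alpha>)"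
  shows "Q t"
  using grid_induct_aux[of Q t0, OF assms(2,3)] assms(1) by blast


theorem theorem2p17:
  fixes t0 :: "'m::finite \<Rightarrow> int"
    and T :: "'m \<Rightarrow> nat"
    and A :: "'m \<Rightarrow> ('m \<Rightarrow> int) \<Rightarrow> complex^'n::finite^'n"
    and \<Phi> :: "('m \<Rightarrow> int) \<Rightarrow> complex^'n^'n"
  assumes "T \<noteq> 0"
    and compat: "\<forall>t \<ge> t0. \<forall>\<alpha> \<beta>.
        A \<alpha> (t + unit_pt \<beta>) ** A \<beta> t = A \<beta> (t + unit_pt \<alpha>) ** A \<alpha> t"
    and periodic: "\<forall>t \<ge> t0. \<forall>\<alpha>. A \<alpha> (\<lambda>\<beta>. t \<beta> + int (T \<beta>)) = A \<alpha> t"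
    and inv: "\<forall>t \<ge> t0. \<forall>\<alpha>. invertible (A \<alpha> t)"
    and Phi: "is_transition_from A t0 \<Phi>"
  shows "\<exists>(P :: ('m \<Rightarrow> int) \<Rightarrow> complex^'n^'n) (B :: complex^'n^'n).
           (\<forall>t \<ge> t0. P (\<lambda>\<beta>. t \<beta> + int (T \<beta>)) = P t) \<and> invertible B \<and>
           (\<forall>t \<ge> t0. \<Phi> t = P t ** mat_ipow B (abs_pt t))"
proof -
  have Phi0: "\<Phi> t0 = mat 1" and rec: "\<And>t \<alpha>. t0 \<le> t \<Longrightarrow> \<Phi> (t + unit_pt \<alpha>) = A \<alpha> t ** \<Phi> t"
    using Phi unfolding is_transition_from_def by auto
  define sh where "sh = (\<lambda>t::'m \<Rightarrow> int. \<lambda>\<beta>. t \<beta> + int (T \<beta>))"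
  have sh_ge: "t0 \<le> sh t" if "t0 \<le> t" for t
  proof -
    have "\<forall>\<beta>. t0 \<beta> \<le> t \<beta>" using that by (simp add: le_fun_def)
    then have "\<forall>\<beta>. t0 \<beta> \<le> t \<beta> + int (T \<beta>)" by (simp add: add_increasing2)
    then show ?thesis by (simp add: le_fun_def sh_def)
  qed
  have sh_unit: "sh (t + unit_pt \<alpha>) = sh t + unit_pt \<alpha>" for t \<alpha> by (simp add: sh_def fun_eq_iff)
  define C where "C = \<Phi> (sh t0)"
  have shift: "\<Phi> (sh t) = \<Phi> t ** C" if "t0 \<le> t" for t
    using that
  proof (induction t rule: grid_induct)
    case base then show ?case by (simp add: C_def Phi0)
  next
    case (step t \<alpha>)
    have "\<Phi> (sh (t + unit_pt \<alpha>)) = A \<alpha> (sh t) ** \<Phi> (sh t)"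
      unfolding sh_unit using rec sh_ge step by blast
    also have "\<dots> = A \<alpha> t ** (\<Phi> t ** C)"
    proof -
      have "A \<alpha> (sh t) = A \<alpha> t" using periodic step(1) unfolding sh_def by blast
      then show ?thesis using step(2) by (simp only:)
    qed
    also have "\<dots> = \<Phi> (t + unit_pt \<alpha>) ** C"
    proof -
      have "\<Phi> (t + unit_pt \<alpha>) = A \<alpha> t ** \<Phi> t" using rec step(1) by blast
      then show ?thesis by (simp only: matrix_mul_assoc)
    qed
    finally show ?case .
  qed
  have invPhi: "invertible (\<Phi> t)" if "t0 \<le> t" for t
    using that
  proof (induction t rule: grid_induct)
    case base then show ?case by (simp add: Phi0 invertible_mat1)
  next
    case (step t \<alpha>)
    have e: "\<Phi> (t + unit_pt \<alpha>) = A \<alpha> t ** \<Phi> t" using rec step by blast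
    have "invertible (A \<alpha> t)" using inv step by blast
    then show ?case unfolding e using step invertible_mult by blast
  qed
  have "t0 \<le> t0" by simp
  then have Cinv: "invertible C" unfolding C_def using invPhi sh_ge by blast
  define k where "k = (\<Sum>\<beta>\<in>UNIV. T \<beta>)"
  obtain \<beta>0 where "T \<beta>0 \<noteq> 0" using \<open>T \<noteq> 0\<close> by (auto simp: fun_eq_iff)
  moreover have "T \<beta>0 \<le> k" unfolding k_def by (rule member_le_sum) auto
  ultimately have kpos: "k > 0" by simp
  obtain B where B: "invertible B" "mat_pow B k = C" using matrix_root[OF Cinv kpos] by blast
  have ipk: "mat_ipow B (int k) = C" using B by (simp add: mat_ipow_def)
  have abs_sh: "abs_pt (sh t) = abs_pt t + int k" for t
    by (simp add: abs_pt_def sh_def k_def sum.distrib)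
  define P where "P = (\<lambda>t. \<Phi> t ** mat_ipow B (- abs_pt t))"
  have per: "P (sh t) = P t" if "t0 \<le> t" for t
  proof -
    have eq: "- abs_pt (sh t) = - abs_pt t - int k" unfolding abs_sh by simp
    have "P (sh t) = (\<Phi> t ** C) ** mat_ipow B (- abs_pt t - int k)"
      unfolding P_def shift[OF that] eq by (rule refl)
    also have "\<dots> = \<Phi> t ** (mat_ipow B (int k) ** mat_ipow B (- abs_pt t - int k))"
      unfolding ipk by (simp only: matrix_mul_assoc)
    also have "mat_ipow B (int k) ** mat_ipow B (- abs_pt t - int k) = mat_ipow B (- abs_pt t)"
      using ipow_add[OF B(1), of "- abs_pt t - int k" "int k"] by simp
    finally show ?thesis unfolding P_def .
  qed
  have dec: "\<Phi> t = P t ** mat_ipow B (abs_pt t)" for t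
  proof -
    have "P t ** mat_ipow B (abs_pt t) = \<Phi> t ** mat_ipow B (abs_pt t + - abs_pt t)"
      unfolding P_def ipow_add[OF B(1)] by (simp only: matrix_mul_assoc)
    also have "mat_ipow B (abs_pt t + - abs_pt t) = mat 1" by (simp add: mat_ipow_def)
    finally show ?thesis by simp
  qed
  have per': "\<forall>t \<ge> t0. P (\<lambda>\<beta>. t \<beta> + int (T \<beta>)) = P t"
    using per unfolding sh_def by blast
  show ?thesis
    using per' dec B(1) by blast
qed

end
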